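(* For every real $r$ with $0<r<1/2$ and every $M>0$ there exists a nilpotent square complex matrix $S$ (of size depending on $r$ and $M$) such that $\|\sqrt{I-S}\|\le3$, whereas $\|\sqrt{\tau-S}\|\ge M$ for every $\tau\in\mathbb C$ with $|\tau-1|=r$. (One may take $S=4J_N-4J_N^2$ for $N$ large enough, where $J_N$ is the $N\times N$ Jordan block with ones on the first subdiagonal and zeros elsewhere.)
   Context: Matrix norms are operator norms induced by the Euclidean norm. $\sqrt{\tau-S}$ is defined by the Riesz–Dunford (holomorphic) functional calculus applied to the function $z\mapsto\sqrt{\tau-z}$, which is holomorphic near $\sigma(S)=\{0\}$, where $\sqrt{\cdot}$ is the principal branch $\sqrt w=|w|^{1/2}e^{i(\arg w)/2}$, $\arg w\in(-\pi,\pi]$. *)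

theory Defs
  imports "HOL-Analysis.Analysis" "Jordan_Normal_Form.Matrix"
begin

definition nilpotent_mat :: "complex mat \<Rightarrow> bool" where
  "nilpotent_mat S \<longleftrightarrow> (\<exists>k. S ^\<^sub>m k = 0\<^sub>m (dim_row S) (dim_col S))"

definition vec_norm2 :: "complex vec \<Rightarrow> real" where
  "vec_norm2 v = sqrt (\<Sum>i<dim_vec v. (cmod (v $ i))\<^sup>2)"

definition op_norm :: "complex mat \<Rightarrow> real" where
  "op_norm A = Sup {vec_norm2 (A *\<^sub>v v) | v. v \<in> carrier_vec (dim_col A) \<and> vec_norm2 v = 1}"

definition resolvent :: "complex mat \<Rightarrow> complex \<Rightarrow> complex mat" where
  "resolvent S z = (THE B. B \<in> carrier_mat (dim_row S) (dim_row S) \<and>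
      (z \<cdot>\<^sub>m 1\<^sub>m (dim_row S) - S) * B = 1\<^sub>m (dim_row S))"

text \<open>Riesz--Dunford integral (1/(2 pi i)) \<ointegral> f(z) (zI - S)^(-1) dz over the circle
  |z| = rho (positively oriented), computed entrywise.\<close>
definition rd_circle :: "(complex \<Rightarrow> complex) \<Rightarrow> complex mat \<Rightarrow> real \<Rightarrow> complex mat" where
  "rd_circle f S \<rho> = mat (dim_row S) (dim_col S) (\<lambda>(i,j).
     integral {0..2*pi} (\<lambda>t. f (of_real \<rho> * cis t) * (resolvent S (of_real \<rho> * cis t) $$ (i,j))
                               * (\<i> * of_real \<rho> * cis t)) / (2 * of_real pi * \<i>))"

text \<open>Holomorphic functional calculus for a matrix with spectrum {0} (e.g. nilpotent):
  the contour is any small circle around 0 inside the domain of holomorphy of f;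
  by Cauchy's theorem the integral is independent of small radii, so we take the
  limit as the radius tends to 0+.\<close>
definition holo_calc0 :: "(complex \<Rightarrow> complex) \<Rightarrow> complex mat \<Rightarrow> complex mat" where
  "holo_calc0 f S = mat (dim_row S) (dim_col S) (\<lambda>(i,j). Lim (at_right 0) (\<lambda>\<rho>. rd_circle f S \<rho> $$ (i,j)))"

definition sqrt_shift :: "complex \<Rightarrow> complex mat \<Rightarrow> complex mat" where
  "sqrt_shift \<tau> S = holo_calc0 (\<lambda>z. csqrt (\<tau> - z)) S"

end

theory Submission imports Defs "HOL-Complex_Analysis.Complex_Analysis" begin


definition toep :: "nat \<Rightarrow> complex fps \<Rightarrow> complex mat" where
  "toep n a = mat n n (\<lambda>(i,j). if j \<le> i then fps_nth a (i-j) else 0)"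

lemma toep_carrier[simp]: "toep n a \<in> carrier_mat n n"
  and toep_dim[simp]: "dim_row (toep n a) = n" "dim_col (toep n a) = n"
  by (auto simp: toep_def)

lemma toep_index[simp]: "i < n \<Longrightarrow> j < n \<Longrightarrow> toep n a $$ (i,j) = (if j \<le> i then fps_nth a (i-j) else 0)"
  by (simp add: toep_def)

lemma toep_cong: "(\<And>m. m < n \<Longrightarrow> fps_nth a m = fps_nth b m) \<Longrightarrow> toep n a = toep n b"
  by (intro eq_matI) auto

lemma toep_one: "toep n 1 = 1\<^sub>m n"
  by (intro eq_matI) auto

lemma toep_minus: "toep n (a - b) = toep n a - toep n b"
  by (intro eq_matI) auto

lemma toep_const: "toep n (fps_const z) = z \<cdot>\<^sub>m 1\<^sub>m n"
  by (intro eq_matI) auto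

lemma toep_mult: "toep n a * toep n b = toep n (a * b)"
proof (intro eq_matI)
  fix i j assume ij: "i < dim_row (toep n (a*b))" "j < dim_col (toep n (a*b))"
  hence i: "i < n" and j: "j < n" by auto
  have "(toep n a * toep n b) $$ (i,j) = (\<Sum>l\<in>{0..<n}. toep n a $$ (i,l) * toep n b $$ (l,j))"
    using i j by (simp add: scalar_prod_def)
  also have "\<dots> = (\<Sum>l\<in>{0..<n}. if j \<le> l \<and> l \<le> i then fps_nth a (i-l) * fps_nth b (l-j) else 0)"
    using i j by (intro sum.cong) auto
  also have "\<dots> = (\<Sum>l\<in>{j..i}. fps_nth a (i-l) * fps_nth b (l-j))"
    using i j by (subst sum.inter_filter[symmetric]) (auto intro!: sum.cong)
  also have "\<dots> = (if j \<le> i then fps_nth (a*b) (i-j) else 0)"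
  proof (cases "j \<le> i")
    case True
    have "(\<Sum>l\<in>{j..i}. fps_nth a (i-l) * fps_nth b (l-j)) = (\<Sum>q\<in>{0..i-j}. fps_nth a (i-j-q) * fps_nth b q)"
      using True by (intro sum.reindex_bij_witness[where i="\<lambda>q. q + j" and j="\<lambda>l. l - j"]) auto
    also have "\<dots> = fps_nth (b*a) (i-j)" by (simp add: fps_mult_nth mult.commute[of "fps_nth b _"])
    finally show ?thesis using True by (simp add: mult.commute)
  qed auto
  finally show "(toep n a * toep n b) $$ (i,j) = toep n (a*b) $$ (i,j)" using i j by simp
qed auto

lemma toep_pow: "toep n a ^\<^sub>m k = toep n (a ^ k)"
  by (induction k) (auto simp: toep_one toep_mult power_Suc2 mult.commute)

lemma pow_prefix0: "fps_nth a 0 = 0 \<Longrightarrow> m < k \<Longrightarrow> fps_nth (a ^ k) m = (0::complex)"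
  using startsby_zero_power_prefix[of a k] by auto

lemma toep_nilpotent:
  assumes "fps_nth a 0 = 0"
  shows "nilpotent_mat (toep n a)"
  unfolding nilpotent_mat_def
proof (intro exI[of _ n])
  show "toep n a ^\<^sub>m n = 0\<^sub>m (dim_row (toep n a)) (dim_col (toep n a))"
    unfolding toep_pow using pow_prefix0[OF assms] by (intro eq_matI) auto
qed

definition resQ :: "complex fps \<Rightarrow> nat \<Rightarrow> complex \<Rightarrow> complex fps" where
  "resQ a n z = (\<Sum>k<n. fps_const (1 / z ^ Suc k) * a ^ k)"

lemma resQ_eq: 
  assumes "z \<noteq> 0"
  shows "(fps_const z - a) * resQ a n z = 1 - fps_const (1 / z ^ n) * a ^ n"
proof (induction n)
  case 0 thus ?case by (simp add: resQ_def)
next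
  case (Suc n)
  have e: "fps_const z * fps_const (1 / z ^ Suc n) = fps_const (1 / z ^ n)"
    using assms by (simp add: field_simps)
  have "(fps_const z - a) * resQ a (Suc n) z = (fps_const z - a) * resQ a n z + 
     (fps_const z * fps_const (1 / z ^ Suc n)) * a ^ n - fps_const (1 / z ^ Suc n) * a ^ Suc n"
    by (simp add: resQ_def algebra_simps)
  also have "\<dots> = 1 - fps_const (1 / z ^ Suc n) * a ^ Suc n"
    unfolding e Suc by simp
  finally show ?case .
qed

lemma resolvent_toep:
  assumes "z \<noteq> 0" "fps_nth a 0 = 0"
  shows "resolvent (toep n a) z = toep n (resQ a n z)"
proof -
  have L: "z \<cdot>\<^sub>m 1\<^sub>m n - toep n a = toep n (fps_const z - a)"
    by (simp add: toep_minus toep_const)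
  have inv: "toep n ((fps_const z - a) * resQ a n z) = 1\<^sub>m n"
    unfolding resQ_eq[OF assms(1)] toep_one[symmetric]
    using pow_prefix0[OF assms(2)] by (intro toep_cong) auto
  have ex: "(z \<cdot>\<^sub>m 1\<^sub>m n - toep n a) * toep n (resQ a n z) = 1\<^sub>m n"
    unfolding L toep_mult inv ..
  have inv2: "toep n (resQ a n z) * (z \<cdot>\<^sub>m 1\<^sub>m n - toep n a) = 1\<^sub>m n"
    unfolding L toep_mult using inv by (simp add: mult.commute)
  show ?thesis unfolding resolvent_def toep_dim
  proof (rule the_equality)
    show "toep n (resQ a n z) \<in> carrier_mat n n \<and> (z \<cdot>\<^sub>m 1\<^sub>m n - toep n a) * toep n (resQ a n z) = 1\<^sub>m n"
      using ex by simp
  next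
    fix B assume B: "B \<in> carrier_mat n n \<and> (z \<cdot>\<^sub>m 1\<^sub>m n - toep n a) * B = 1\<^sub>m n"
    have "B = (toep n (resQ a n z) * (z \<cdot>\<^sub>m 1\<^sub>m n - toep n a)) * B" using inv2 B left_mult_one_mat[of B n n] by simp
    also have "\<dots> = toep n (resQ a n z) * ((z \<cdot>\<^sub>m 1\<^sub>m n - toep n a) * B)"
      using B unfolding L by (intro assoc_mult_mat) auto
    also have "\<dots> = toep n (resQ a n z)" using B by simp
    finally show "B = toep n (resQ a n z)" .
  qed
qed

lemma image_div_2pi: "(\<lambda>x. x / (2*pi)) ` {0..2*pi} = {0..1}"
proof
  show "(\<lambda>x. x / (2*pi)) ` {0..2*pi} \<subseteq> {0..1}" by auto
  show "{0..1} \<subseteq> (\<lambda>x. x / (2*pi)) ` {0..2*pi}"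
  proof
    fix y :: real assume "y \<in> {0..1}"
    hence "y * (2*pi) \<in> {0..2*pi}" "y = (y*(2*pi)) / (2*pi)" by auto
    thus "y \<in> (\<lambda>x. x / (2*pi)) ` {0..2*pi}" by blast
  qed
qed

lemma cauchy_02pi:
  assumes holo: "f holomorphic_on ball 0 R" and rho: "0 < \<rho>" "\<rho> < R"
  shows "((\<lambda>t. f (of_real \<rho> * cis t) / (of_real \<rho> * cis t) ^ Suc k * (\<i> * of_real \<rho> * cis t))
           has_integral (2*pi*\<i> / fact k * (deriv^^k) f 0)) {0..2*pi}"
proof -
  define h where "h = (\<lambda>t. f (of_real \<rho> * cis t) / (of_real \<rho> * cis t) ^ Suc k * (\<i> * of_real \<rho> * cis t))"
  define I where "I = 2*pi*\<i> / fact k * (deriv^^k) f 0"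
  have sub: "cball 0 \<rho> \<subseteq> ball (0::complex) R" using rho by auto
  have "continuous_on (cball 0 \<rho>) f"
    using holomorphic_on_imp_continuous_on[OF holo] sub continuous_on_subset by blast
  moreover have "f holomorphic_on ball 0 \<rho>"
    using holo by (rule holomorphic_on_subset) (use rho in auto)
  ultimately have "((\<lambda>u. f u / (u - 0) ^ Suc k) has_contour_integral I) (circlepath 0 \<rho>)"
    unfolding I_def using rho
    by (intro Cauchy_has_contour_integral_higher_derivative_circlepath) auto
  hence "((\<lambda>t. f (circlepath 0 \<rho> t) / (circlepath 0 \<rho> t - 0) ^ Suc k *
             vector_derivative (circlepath 0 \<rho>) (at t within {0..1})) has_integral I) {0..1}"
    unfolding has_contour_integral_def by simp
  hence "((\<lambda>t. of_real (2*pi) * h (2*pi*t)) has_integral I) {0..1}"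
  proof (rule has_integral_spike_finite[where S="{}", rotated 2], simp)
    fix t :: real assume t: "t \<in> {0..1} - {}"
    have c: "cis (2*pi*t) = exp (2 * of_real pi * \<i> * of_real t)"
      by (simp add: cis_conv_exp mult_ac)
    show "of_real (2*pi) * h (2*pi*t) = f (circlepath 0 \<rho> t) / (circlepath 0 \<rho> t - 0) ^ Suc k *
             vector_derivative (circlepath 0 \<rho>) (at t within {0..1})"
      proof -
      have vd: "vector_derivative (circlepath 0 \<rho>) (at t within {0..1}) = 2 * pi * \<i> * \<rho> * exp(2 * of_real pi * \<i> * t)"
        using t by (intro vector_derivative_circlepath01) auto
      show ?thesis unfolding vd h_def c by (simp add: circlepath field_simps)
    qed
  qed
  hence "((\<lambda>t. h (2*pi*t)) has_integral (I / of_real (2*pi))) {0..1}"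
    using has_integral_mult_right[of "\<lambda>t. of_real (2*pi) * h (2*pi*t)" I "{0..1}" "1 / of_real (2*pi)"]
    by simp
  hence "((\<lambda>t. h (2*pi*t)) has_integral (I / of_real (2*pi))) ((\<lambda>x. x / (2*pi)) ` {0..2*pi})"
    unfolding image_div_2pi .
  hence "(h has_integral (\<bar>2*pi\<bar> *\<^sub>R (I / of_real (2*pi)))) {0..2*pi}"
    by (subst (asm) has_integral_stretch_real_iff) auto
  thus ?thesis unfolding h_def[symmetric] I_def[symmetric] by (simp add: scaleR_conv_of_real)
qed

lemma resQ_nth: "fps_nth (resQ a n z) m = (\<Sum>k<n. fps_nth (a ^ k) m / z ^ Suc k)"
  unfolding resQ_def by (simp add: fps_sum_nth)

lemma rd_circle_toep:
  assumes holo: "f holomorphic_on ball 0 R" and rho: "0 < \<rho>" "\<rho> < R"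
    and a0: "fps_nth a 0 = 0" and ij: "i < n" "j < n"
  shows "rd_circle f (toep n a) \<rho> $$ (i,j) = toep n (fps_expansion f 0 oo a) $$ (i,j)"
proof -
  have z0: "of_real \<rho> * cis t \<noteq> 0" for t using rho by simp
  have R: "resolvent (toep n a) (of_real \<rho> * cis t) $$ (i,j) =
     (if j \<le> i then (\<Sum>k<n. fps_nth (a ^ k) (i-j) / (of_real \<rho> * cis t) ^ Suc k) else 0)" for t
    using ij by (simp add: resolvent_toep[OF z0 a0] resQ_nth)
  show ?thesis
  proof (cases "j \<le> i")
    case False
    thus ?thesis using ij by (simp add: rd_circle_def R)
  next
    case True
    define m where "m = i - j"
    have mn: "m < n" using ij unfolding m_def by auto
    define F where "F = (\<lambda>k t. f (of_real \<rho> * cis t) / (of_real \<rho> * cis t) ^ Suc k * (\<i> * of_real \<rho> * cis t))"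
    define D where "D = (\<lambda>k. (deriv^^k) f 0)"
    have int: "((\<lambda>t. \<Sum>k<n. fps_nth (a ^ k) m * F k t) has_integral
               (\<Sum>k<n. fps_nth (a ^ k) m * (2*pi*\<i> / fact k * D k))) {0..2*pi}"
      unfolding F_def D_def
      by (intro has_integral_sum has_integral_mult_right cauchy_02pi[OF holo rho]) auto
    have eq: "(\<lambda>t. f (of_real \<rho> * cis t) * resolvent (toep n a) (of_real \<rho> * cis t) $$ (i,j) * (\<i> * of_real \<rho> * cis t))
             = (\<lambda>t. \<Sum>k<n. fps_nth (a ^ k) m * F k t)"
      unfolding R F_def m_def using True
      by (auto simp: sum_distrib_left sum_distrib_right intro!: sum.cong)
    have "rd_circle f (toep n a) \<rho> $$ (i,j) = (\<Sum>k<n. fps_nth (a ^ k) m * (2*pi*\<i> / fact k * D k)) / (2 * of_real pi * \<i>)"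
      using ij unfolding rd_circle_def by (simp add: eq integral_unique[OF int])
    also have "\<dots> = (\<Sum>k<n. fps_nth (a ^ k) m * (D k / fact k))"
      by (simp add: sum_divide_distrib field_simps)
    also have "\<dots> = (\<Sum>k\<in>{0..m}. fps_nth (a ^ k) m * (D k / fact k))"
      using mn pow_prefix0[OF a0] by (intro sum.mono_neutral_right) auto
    also have "\<dots> = fps_nth (fps_expansion f 0 oo a) m"
      by (simp add: fps_compose_nth fps_expansion_def D_def mult.commute)
    finally show ?thesis using ij True by (simp add: m_def)
  qed
qed

lemma holo_calc0_toep:
  assumes holo: "f holomorphic_on ball 0 R" and R: "0 < R" and a0: "fps_nth a 0 = 0"
  shows "holo_calc0 f (toep n a) = toep n (fps_expansion f 0 oo a)"
proof (intro eq_matI)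
  fix i j assume "i < dim_row (toep n (fps_expansion f 0 oo a))" "j < dim_col (toep n (fps_expansion f 0 oo a))"
  hence ij: "i < n" "j < n" by auto
  have ev: "eventually (\<lambda>\<rho>. rd_circle f (toep n a) \<rho> $$ (i,j) = toep n (fps_expansion f 0 oo a) $$ (i,j)) (at_right 0)"
    using eventually_at_right_real[OF R] 
    by eventually_elim (intro rd_circle_toep[OF holo _ _ a0 ij], auto)
  have "((\<lambda>\<rho>. rd_circle f (toep n a) \<rho> $$ (i,j)) \<longlongrightarrow> toep n (fps_expansion f 0 oo a) $$ (i,j)) (at_right 0)"
    by (rule tendsto_eventually[OF ev[THEN eventually_mono]]) simp
  hence "Lim (at_right 0) (\<lambda>\<rho>. rd_circle f (toep n a) \<rho> $$ (i,j)) = toep n (fps_expansion f 0 oo a) $$ (i,j)"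
    by (intro tendsto_Lim) auto
  thus "holo_calc0 f (toep n a) $$ (i,j) = toep n (fps_expansion f 0 oo a) $$ (i,j)"
    using ij unfolding holo_calc0_def by simp
qed (auto simp: holo_calc0_def)

definition PP :: "complex fps" where "PP = fps_const 4 * fps_X - fps_const 4 * fps_X ^ 2"

lemma PP0: "fps_nth PP 0 = 0" by (simp add: PP_def)

definition AA :: "complex \<Rightarrow> complex fps" where
  "AA \<tau> = fps_expansion (\<lambda>z. csqrt (\<tau> - z)) 0 oo PP"

lemma holo_sqrt: 
  assumes "0 < Re \<tau>"
  shows "(\<lambda>z. csqrt (\<tau> - z)) holomorphic_on ball 0 (Re \<tau>)"
proof (intro holomorphic_on_csqrt' holomorphic_intros)
  fix z assume "z \<in> ball (0::complex) (Re \<tau>)"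
  hence "cmod z < Re \<tau>" by simp
  hence "Re z < Re \<tau>" using complex_Re_le_cmod[of z] by linarith
  thus "\<tau> - z \<notin> \<real>\<^sub>\<le>\<^sub>0" by (auto simp: complex_nonpos_Reals_iff)
qed

lemma sqrt_shift_toep:
  assumes "0 < Re \<tau>"
  shows "sqrt_shift \<tau> (toep n PP) = toep n (AA \<tau>)"
  unfolding sqrt_shift_def AA_def using holo_sqrt[OF assms] assms PP0
  by (intro holo_calc0_toep) auto

lemma AA0: "fps_nth (AA \<tau>) 0 = csqrt \<tau>"
  by (simp add: AA_def fps_expansion_def)

lemma AA_sq:
  assumes "0 < Re \<tau>"
  shows "AA \<tau> * AA \<tau> = fps_const \<tau> - PP"
proof -
  define f where "f = (\<lambda>z. csqrt (\<tau> - z))"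
  define C where "C = fps_expansion f 0"
  have "f has_fps_expansion C"
    unfolding C_def f_def using holo_sqrt[OF assms] assms
    by (intro has_fps_expansion_fps_expansion[of "ball 0 (Re \<tau>)"]) auto
  hence e1: "(\<lambda>z. f z * f z) has_fps_expansion C * C"
    by (intro has_fps_expansion_mult)
  have ff: "(\<lambda>z. f z * f z) = (\<lambda>z. \<tau> - z)"
    unfolding f_def by (auto simp: power2_eq_square[symmetric])
  have e2: "(\<lambda>z. \<tau> - z) has_fps_expansion fps_const \<tau> - fps_X"
    by (intro has_fps_expansion_diff has_fps_expansion_const has_fps_expansion_fps_X)
  have CC: "C * C = fps_const \<tau> - fps_X"
  proof (rule fps_ext)
    fix k show "fps_nth (C*C) k = fps_nth (fps_const \<tau> - fps_X) k"
      using fps_nth_fps_expansion[OF e1[unfolded ff], of k] fps_nth_fps_expansion[OF e2, of k] by simp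
  qed
  have "AA \<tau> * AA \<tau> = (C * C) oo PP"
    unfolding AA_def C_def f_def by (rule fps_compose_mult_distrib[symmetric, OF PP0])
  also have "\<dots> = fps_const \<tau> - PP"
    unfolding CC by (simp add: fps_compose_sub_distrib PP0)
  finally show ?thesis .
qed

lemma fps_sqrt_unique:
  fixes a b :: "complex fps"
  assumes "a * a = b * b" "fps_nth a 0 = fps_nth b 0" "fps_nth b 0 \<noteq> 0"
  shows "a = b"
proof -
  have "(a - b) * (a + b) = 0" using assms(1) by (simp add: algebra_simps)
  moreover have "fps_nth (a + b) 0 \<noteq> 0" using assms(2,3) by simp
  hence "a + b \<noteq> 0" by (metis fps_zero_nth)
  ultimately show ?thesis by simp
qed

lemma AA1: "AA 1 = 1 - fps_const 2 * fps_X"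
proof (rule fps_sqrt_unique)
  show "AA 1 * AA 1 = (1 - fps_const 2 * fps_X) * (1 - fps_const 2 * fps_X)"
    unfolding AA_sq[of 1, simplified] PP_def
    by (simp add: algebra_simps power2_eq_square fps_const_mult[symmetric] del: fps_const_mult)
qed (simp_all add: AA0)



lemma PP_nth: "fps_nth PP k = (if k = 1 then 4 else if k = 2 then -4 else 0)"
  by (simp add: PP_def fps_X_power_iff fps_X_nth)

lemma Q_poly: "fps_const \<tau> - PP = fps_of_poly [:\<tau>, -4, 4:]"
proof (rule fps_ext)
  fix k show "fps_nth (fps_const \<tau> - PP) k = fps_nth (fps_of_poly [:\<tau>, -4, 4:]) k"
  proof -
    consider "k = 0" | "k = 1" | "k = 2" | j where "k = Suc (Suc (Suc j))"
      by (metis One_nat_def Suc_1 not0_implies_Suc)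
    thus ?thesis
    proof cases
      case 4
      thus ?thesis by (simp only: PP_nth fps_sub_nth fps_of_poly_nth coeff_pCons_Suc) simp
    qed (simp_all add: PP_nth numeral_2_eq_2)
  qed
qed

lemma conv_radius_bounded:
  fixes a :: "complex fps"
  assumes B: "\<And>m. cmod (fps_nth a m) \<le> B"
  shows "fps_conv_radius a \<ge> 1"
  unfolding fps_conv_radius_def
proof (rule conv_radius_geI_ex')
  fix r :: real assume r: "0 < r" "ereal r < 1"
  hence r1: "r < 1" by simp
  have "summable (\<lambda>n. B * r ^ n)" using r r1 by (intro summable_mult summable_geometric) auto
  moreover have "norm (fps_nth a n * of_real r ^ n) \<le> B * r ^ n" for n
    using r B[of n] by (simp add: norm_mult norm_power mult_right_mono)
  ultimately show "summable (\<lambda>n. fps_nth a n * of_real r ^ n)"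
    using summable_comparison_test'[of "\<lambda>n. B * r ^ n" 0 "\<lambda>n. fps_nth a n * of_real r ^ n"] by blast
qed

lemma AA_unbounded:
  assumes re: "0 < Re \<tau>" and t1: "\<tau> \<noteq> 1" and small: "cmod (1 - \<tau>) < 1"
  shows "\<exists>m. cmod (fps_nth (AA \<tau>) m) > B"
proof (rule ccontr)
  assume "\<not> ?thesis"
  hence bnd: "\<And>m. cmod (fps_nth (AA \<tau>) m) \<le> B" by (auto simp: not_less)
  define a where "a = AA \<tau>"
  have rad: "fps_conv_radius a \<ge> 1" unfolding a_def by (rule conv_radius_bounded[OF bnd])
  have inb: "ereal (norm w) < fps_conv_radius a" if "w \<in> ball 0 1" for w :: complex
  proof -
    have "ereal (norm w) < 1" using that by simp
    thus ?thesis using rad by (rule less_le_trans)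
  qed
  define h where "h = eval_fps a"
  have hsq: "h w * h w = \<tau> - 4 * w + 4 * w^2" if "w \<in> ball 0 1" for w
  proof -
    have "h w * h w = eval_fps (a * a) w"
      unfolding h_def using inb[OF that] by (simp add: eval_fps_mult)
    also have "\<dots> = eval_fps (fps_of_poly [:\<tau>, -4, 4:]) w"
      unfolding a_def AA_sq[OF re] Q_poly ..
    also have "\<dots> = \<tau> - 4 * w + 4 * w^2" by (simp add: algebra_simps power2_eq_square)
    finally show ?thesis .
  qed
  define w0 where "w0 = (1 - csqrt (1 - \<tau>)) / 2"
  have "cmod w0 \<le> (1 + cmod (csqrt (1 - \<tau>))) / 2"
    unfolding w0_def using norm_triangle_ineq4[of 1 "csqrt (1 - \<tau>)"] by (simp add: norm_divide)
  also have "cmod (csqrt (1 - \<tau>)) < 1" using small by simp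
  finally have w0b: "w0 \<in> ball 0 1" by simp
  have id: "\<tau> - 4 * w0 + 4 * w0^2 = 0"
  proof -
    have "\<tau> - 4 * w0 + 4 * w0^2 = \<tau> - 1 + (1 - 2*w0)^2" by (simp add: algebra_simps power2_eq_square)
    also have "1 - 2 * w0 = csqrt (1 - \<tau>)" unfolding w0_def by (simp add: field_simps)
    finally show ?thesis by simp
  qed
  have h0: "h w0 = 0" using hsq[OF w0b] id by simp
  obtain h' where hd: "(h has_field_derivative h') (at w0)"
    using has_field_derivative_eval_fps[OF inb[OF w0b]] unfolding h_def by blast
  have d1: "((\<lambda>w. h w * h w) has_field_derivative (h w0 * h' + h' * h w0)) (at w0)"
    using DERIV_mult[OF hd hd] by (simp add: mult.commute)
  have d2: "((\<lambda>w. \<tau> - 4 * w + 4 * w^2) has_field_derivative (- 4 + 8 * w0)) (at w0)"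
    by (auto intro!: derivative_eq_intros)
  have d1': "((\<lambda>w. \<tau> - 4 * w + 4 * w^2) has_field_derivative (h w0 * h' + h' * h w0)) (at w0)"
    by (rule has_field_derivative_transform_within_open[OF d1 _ w0b]) (auto simp: hsq)
  have "- 4 + 8 * w0 = 0" using DERIV_unique[OF d2 d1'] h0 by simp
  hence "csqrt (1 - \<tau>) = 0" unfolding w0_def by (simp add: field_simps)
  hence "1 - \<tau> = 0" by simp
  thus False using t1 by simp
qed


lemma AA_rec:
  assumes re: "0 < Re \<tau>" and m: "m \<ge> 1"
  shows "fps_nth (AA \<tau>) m = (- fps_nth PP m - (\<Sum>i\<in>{1..m-1}. fps_nth (AA \<tau>) i * fps_nth (AA \<tau>) (m - i))) / (2 * csqrt \<tau>)"
proof -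
  define a where "a = AA \<tau>"
  have cs: "csqrt \<tau> \<noteq> 0" using re by auto
  have set: "{0..m} = insert 0 (insert m {1..m-1})" using m by auto
  have "- fps_nth PP m = fps_nth (a * a) m"
    unfolding a_def AA_sq[OF re] using m by simp
  also have "\<dots> = (\<Sum>i\<in>{0..m}. fps_nth a i * fps_nth a (m - i))" by (simp add: fps_mult_nth)
  also have "\<dots> = 2 * csqrt \<tau> * fps_nth a m + (\<Sum>i\<in>{1..m-1}. fps_nth a i * fps_nth a (m - i))"
    unfolding set using m by (simp add: a_def AA0 algebra_simps)
  finally show ?thesis using cs unfolding a_def by (simp add: field_simps)
qed

lemma AA_cont: "continuous_on {\<tau>. 0 < Re \<tau>} (\<lambda>\<tau>. fps_nth (AA \<tau>) m)"
proof (induction m rule: less_induct)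
  case (less m)
  have sub: "{\<tau>. 0 < Re \<tau>} \<subseteq> - \<real>\<^sub>\<le>\<^sub>0" by (auto simp: complex_nonpos_Reals_iff)
  have csc: "continuous_on {\<tau>. 0 < Re \<tau>} csqrt"
    by (rule continuous_on_subset[OF continuous_on_csqrt sub])
  show ?case
  proof (cases "m = 0")
    case True thus ?thesis by (simp add: AA0 csc)
  next
    case False
    have "continuous_on {\<tau>. 0 < Re \<tau>} (\<lambda>\<tau>. (- fps_nth PP m - (\<Sum>i\<in>{1..m-1}. fps_nth (AA \<tau>) i * fps_nth (AA \<tau>) (m - i))) / (2 * csqrt \<tau>))"
      using False
      by (intro continuous_intros csc less.IH) auto
    thus ?thesis
      by (rule continuous_on_cong[THEN iffD1, rotated 2]) (use False AA_rec in auto)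
  qed
qed

lemma exists_N:
  assumes r: "0 < r" "r < 1/2"
  shows "\<exists>N>0. \<forall>\<tau>. cmod (\<tau> - 1) = r \<longrightarrow> (\<exists>m<N. cmod (fps_nth (AA \<tau>) m) > M)"
proof -
  define D where "D = {\<tau>::complex. 0 < Re \<tau>}"
  define U where "U = (\<lambda>m. (\<lambda>\<tau>. cmod (fps_nth (AA \<tau>) m)) -` {M<..} \<inter> D)"
  have openD: "open D" unfolding D_def using open_halfspace_Re_gt[of 0] by simp
  have opn: "open (U m)" for m
  proof -
    have "continuous_on D (\<lambda>\<tau>. cmod (fps_nth (AA \<tau>) m))"
      unfolding D_def by (intro continuous_intros AA_cont)
    hence "open ((\<lambda>\<tau>. cmod (fps_nth (AA \<tau>) m)) -` {M<..} \<inter> D)"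
      using openD continuous_on_open_vimage[of D] open_greaterThan[of M] by blast
    thus ?thesis unfolding U_def .
  qed
  have cov: "sphere 1 r \<subseteq> (\<Union>m\<in>UNIV. U m)"
  proof
    fix \<tau> assume "\<tau> \<in> sphere (1::complex) r"
    hence t: "cmod (1 - \<tau>) = r" by (simp add: dist_norm)
    have "Re (1 - \<tau>) \<le> r" using complex_Re_le_cmod[of "1 - \<tau>"] t by simp
    hence re: "0 < Re \<tau>" using r by simp
    have "\<tau> \<noteq> 1" using t r by auto
    then obtain m where "cmod (fps_nth (AA \<tau>) m) > M"
      using AA_unbounded[OF re _ , of M] t r by auto
    thus "\<tau> \<in> (\<Union>m\<in>UNIV. U m)" using re unfolding U_def D_def by auto
  qed
  obtain C where C0: "C \<subseteq> UNIV" and C: "finite C" "sphere 1 r \<subseteq> (\<Union>m\<in>C. U m)"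
    by (rule compactE_image[OF compact_sphere opn cov])
  obtain k where k: "C \<subseteq> {..<k}" using finite_nat_bounded[OF C(1)] by blast
  have "\<forall>\<tau>. cmod (\<tau> - 1) = r \<longrightarrow> (\<exists>m<Suc k. cmod (fps_nth (AA \<tau>) m) > M)"
  proof (intro allI impI)
    fix \<tau> :: complex assume "cmod (\<tau> - 1) = r"
    hence "\<tau> \<in> sphere 1 r" by (simp add: dist_norm norm_minus_commute)
    then obtain m where m: "m \<in> C" "\<tau> \<in> U m" using C(2) by blast
    have mk: "m < Suc k" using m k by auto
    have "cmod (fps_nth (AA \<tau>) m) > M" using m unfolding U_def by simp
    with mk show "\<exists>m<Suc k. cmod (fps_nth (AA \<tau>) m) > M" by blast
  qed
  thus ?thesis by (intro exI[of _ "Suc k"]) simp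
qed



lemma vec_norm2_L2: "vec_norm2 v = L2_set (\<lambda>i. cmod (v $ i)) {..<dim_vec v}"
  unfolding vec_norm2_def L2_set_def ..

lemma vec_norm2_ge: "i < dim_vec v \<Longrightarrow> cmod (v $ i) \<le> vec_norm2 v"
  unfolding vec_norm2_L2 by (rule member_le_L2_set) auto

lemma mat_vec_bound:
  assumes v: "dim_vec v = dim_col A" "vec_norm2 v = 1"
  shows "vec_norm2 (A *\<^sub>v v) \<le> (\<Sum>i<dim_row A. \<Sum>j<dim_col A. cmod (A $$ (i,j)))"
proof -
  have "vec_norm2 (A *\<^sub>v v) \<le> (\<Sum>i<dim_row A. cmod ((A *\<^sub>v v) $ i))"
    unfolding vec_norm2_L2 dim_mult_mat_vec by (intro L2_set_le_sum) auto
  also have "\<dots> \<le> (\<Sum>i<dim_row A. \<Sum>j<dim_col A. cmod (A $$ (i,j)))"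
  proof (rule sum_mono)
    fix i assume i: "i \<in> {..<dim_row A}"
    have "cmod ((A *\<^sub>v v) $ i) = cmod (\<Sum>j\<in>{0..<dim_col A}. A $$ (i,j) * v $ j)"
      using i v by (simp add: scalar_prod_def)
    also have "\<dots> \<le> (\<Sum>j\<in>{0..<dim_col A}. cmod (A $$ (i,j) * v $ j))" by (rule norm_sum)
    also have "\<dots> \<le> (\<Sum>j\<in>{0..<dim_col A}. cmod (A $$ (i,j)))"
    proof (rule sum_mono)
      fix j assume "j \<in> {0..<dim_col A}"
      hence "cmod (v $ j) \<le> 1" using vec_norm2_ge[of j v] v by simp
      thus "cmod (A $$ (i,j) * v $ j) \<le> cmod (A $$ (i,j))"
        by (simp add: norm_mult mult_left_le)
    qed
    finally show "cmod ((A *\<^sub>v v) $ i) \<le> (\<Sum>j<dim_col A. cmod (A $$ (i,j)))"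
      by (simp add: atLeast0LessThan)
  qed
  finally show ?thesis .
qed

lemma op_norm_bdd: "bdd_above {vec_norm2 (A *\<^sub>v v) | v. v \<in> carrier_vec (dim_col A) \<and> vec_norm2 v = 1}"
  by (rule bdd_aboveI[where M="\<Sum>i<dim_row A. \<Sum>j<dim_col A. cmod (A $$ (i,j))"])
     (auto intro!: mat_vec_bound)

lemma vec_norm2_unit: "j < n \<Longrightarrow> vec_norm2 (unit_vec n j) = 1"
proof -
  assume j: "j < n"
  have "(\<Sum>i<n. (cmod (unit_vec n j $ i))\<^sup>2) = (\<Sum>i<n. if i = j then 1 else 0)"
    using j by (intro sum.cong) auto
  thus ?thesis unfolding vec_norm2_def using j by simp
qed

lemma op_norm_ge_entry:
  assumes A: "A \<in> carrier_mat n n" and ij: "i < n" "j < n"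
  shows "cmod (A $$ (i,j)) \<le> op_norm A"
proof -
  have e: "(A *\<^sub>v unit_vec n j) $ i = A $$ (i,j)"
  proof -
    have "(A *\<^sub>v unit_vec n j) $ i = (\<Sum>l\<in>{0..<n}. A $$ (i,l) * unit_vec n j $ l)"
      using A ij by (simp add: scalar_prod_def)
    also have "\<dots> = (\<Sum>l\<in>{0..<n}. if l = j then A $$ (i,l) else 0)"
      using ij by (intro sum.cong) auto
    finally show ?thesis using ij by simp
  qed
  have "cmod (A $$ (i,j)) \<le> vec_norm2 (A *\<^sub>v unit_vec n j)"
    unfolding e[symmetric] using A ij by (intro vec_norm2_ge) auto
  also have "\<dots> \<le> op_norm A"
    unfolding op_norm_def
    by (rule cSup_upper[OF _ op_norm_bdd]) (use A ij vec_norm2_unit in auto)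
  finally show ?thesis .
qed

lemma toep_I2J_apply:
  assumes i: "i < n" and v: "dim_vec v = n"
  shows "(toep n (1 - fps_const 2 * fps_X) *\<^sub>v v) $ i = v $ i - (if i \<ge> 1 then 2 * v $ (i - 1) else 0)"
proof -
  have "(toep n (1 - fps_const 2 * fps_X) *\<^sub>v v) $ i = 
        (\<Sum>l\<in>{0..<n}. toep n (1 - fps_const 2 * fps_X) $$ (i,l) * v $ l)"
    using i v by (simp add: scalar_prod_def)
  also have "\<dots> = (\<Sum>l\<in>{0..<n}. (if l = i then v $ l else 0) - (if i \<ge> 1 \<and> l = i - 1 then 2 * v $ l else 0))"
    using i by (intro sum.cong) (auto simp: fps_X_nth)
  also have "\<dots> = v $ i - (if i \<ge> 1 then 2 * v $ (i - 1) else 0)"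
  proof (cases "i \<ge> 1")
    case True
    thus ?thesis using i by (simp add: sum_subtractf)
  qed (use i in \<open>simp add: sum_subtractf\<close>)
  finally show ?thesis .
qed

lemma shift_L2:
  fixes g :: "nat \<Rightarrow> real"
  shows "L2_set (\<lambda>i. if i \<ge> 1 then g (i - 1) else 0) {..<n} \<le> L2_set g {..<n}"
proof (cases n)
  case 0 thus ?thesis by simp
next
  case (Suc k)
  have "(\<Sum>i<n. (if i \<ge> 1 then g (i - 1) else 0)\<^sup>2) = (\<Sum>i<k. (g i)\<^sup>2)"
    unfolding Suc sum.lessThan_Suc_shift by simp
  also have "\<dots> \<le> (\<Sum>i<n. (g i)\<^sup>2)" unfolding Suc by simp
  finally show ?thesis unfolding L2_set_def by simp
qed

lemma op_norm_I2J:
  assumes n: "0 < n"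
  shows "op_norm (toep n (1 - fps_const 2 * fps_X)) \<le> 3"
  unfolding op_norm_def
proof (rule cSup_least)
  show "{vec_norm2 (toep n (1 - fps_const 2 * fps_X) *\<^sub>v v) |v.
      v \<in> carrier_vec (dim_col (toep n (1 - fps_const 2 * fps_X))) \<and> vec_norm2 v = 1} \<noteq> {}"
    using vec_norm2_unit[OF n] unit_vec_carrier[of n 0] by (auto intro!: exI[of _ "unit_vec n 0"])
next
  fix x assume "x \<in> {vec_norm2 (toep n (1 - fps_const 2 * fps_X) *\<^sub>v v) |v.
      v \<in> carrier_vec (dim_col (toep n (1 - fps_const 2 * fps_X))) \<and> vec_norm2 v = 1}"
  then obtain v where v0: "v \<in> carrier_vec n" "vec_norm2 v = 1" 
    and x: "x = vec_norm2 (toep n (1 - fps_const 2 * fps_X) *\<^sub>v v)" by auto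
  have v: "dim_vec v = n" "vec_norm2 v = 1" using v0 by auto
  define g where "g = (\<lambda>i. cmod (v $ i))"
  have Lg: "L2_set g {..<n} = 1" using v unfolding vec_norm2_L2 g_def by simp
  have "x = L2_set (\<lambda>i. cmod (v $ i - (if i \<ge> 1 then 2 * v $ (i - 1) else 0))) {..<n}"
    unfolding x vec_norm2_L2 dim_mult_mat_vec toep_dim
  proof (intro L2_set_cong refl)
    fix i assume "i \<in> {..<n}"
    hence i: "i < n" by simp
    show "cmod ((toep n (1 - fps_const 2 * fps_X) *\<^sub>v v) $ i) =
          cmod (v $ i - (if i \<ge> 1 then 2 * v $ (i - 1) else 0))"
      by (subst toep_I2J_apply[OF i v(1)]) (rule refl)
  qed
  also have "\<dots> \<le> L2_set (\<lambda>i. g i + 2 * (if i \<ge> 1 then g (i - 1) else 0)) {..<n}"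
    by (intro L2_set_mono) (auto simp: g_def norm_mult intro: order.trans[OF norm_triangle_ineq4])
  also have "\<dots> \<le> L2_set g {..<n} + L2_set (\<lambda>i. 2 * (if i \<ge> 1 then g (i - 1) else 0)) {..<n}"
    by (rule L2_set_triangle_ineq)
  also have "L2_set (\<lambda>i. 2 * (if i \<ge> 1 then g (i - 1) else 0)) {..<n} = 
             2 * L2_set (\<lambda>i. if i \<ge> 1 then g (i - 1) else 0) {..<n}"
    by (simp add: L2_set_right_distrib)
  also have "\<dots> \<le> 2 * L2_set g {..<n}" using shift_L2[of g n] by simp
  finally show "x \<le> 3" using Lg by simp
qed



theorem mainTheorem19:
  fixes r M :: real
  assumes "0 < r" "r < 1/2" "0 < M"
  shows "\<exists>n S. 0 < n \<and> S \<in> carrier_mat n n \<and> nilpotent_mat S \<and> op_norm (sqrt_shift 1 S) \<le> 3 \<and>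
           (\<forall>\<tau>::complex. cmod (\<tau> - 1) = r \<longrightarrow> op_norm (sqrt_shift \<tau> S) \<ge> M)"
proof -
  obtain N where N: "N > 0" and H: "\<And>\<tau>. cmod (\<tau> - 1) = r \<Longrightarrow> \<exists>m<N. cmod (fps_nth (AA \<tau>) m) > M"
    using exists_N[OF assms(1,2), of M] by blast
  define S where "S = toep N PP"
  have "sqrt_shift 1 S = toep N (1 - fps_const 2 * fps_X)"
    unfolding S_def by (subst sqrt_shift_toep) (auto simp: AA1)
  hence one: "op_norm (sqrt_shift 1 S) \<le> 3" using op_norm_I2J[OF N] by simp
  have tau: "op_norm (sqrt_shift \<tau> S) \<ge> M" if t: "cmod (\<tau> - 1) = r" for \<tau>
  proof -
    have "Re (1 - \<tau>) \<le> r" using complex_Re_le_cmod[of "1 - \<tau>"] t by (simp add: norm_minus_commute)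
    hence re: "0 < Re \<tau>" using assms by simp
    obtain m where m: "m < N" "cmod (fps_nth (AA \<tau>) m) > M" using H[OF t] by blast
    have "cmod (fps_nth (AA \<tau>) m) = cmod (toep N (AA \<tau>) $$ (m, 0))" using m N by simp
    also have "\<dots> \<le> op_norm (toep N (AA \<tau>))" using m N by (intro op_norm_ge_entry) auto
    also have "toep N (AA \<tau>) = sqrt_shift \<tau> S" unfolding S_def by (rule sqrt_shift_toep[OF re, symmetric])
    finally show ?thesis using m by simp
  qed
  show ?thesis
    using N one tau toep_nilpotent[OF PP0, of N] unfolding S_def[symmetric]
    by (intro exI[of _ N] exI[of _ S]) (auto simp: S_def)
qed


end
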